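(* Let $W\subset\mathbb{R}^{n+1}$ be a self-dual Wulff shape. Then $W$ is centrally symmetric (i.e. $x\in W$ implies $-x\in W$) if and only if $W$ is the unit disc $D^{n+1}=\{x\in\mathbb{R}^{n+1}:\|x\|\le1\}$.
   Context: For continuous $\gamma:S^n\to\mathbb{R}_+$, the Wulff shape is $\mathcal{W}_\gamma=\bigcap_{\theta\in S^n}\{x\in\mathbb{R}^{n+1}: x\cdot\theta\le\gamma(\theta)\}$ (every convex body with the origin in its interior is of this form). For each $\theta\in S^n$ the ray $\{r\theta:r>0\}$ meets $\partial\mathcal{W}_\gamma$ in exactly one point $w(\theta)\theta$. The dual Wulff shape is $\mathcal{DW}_\gamma=\mathcal{W}_{\overline\gamma}$ with $\overline\gamma(\theta)=1/w(-\theta)$, and $\mathcal{W}_\gamma$ is self-dual if $\mathcal{W}_\gamma=\mathcal{DW}_\gamma$. *)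

theory Defs
  imports "HOL-Analysis.Analysis"
begin

definition wulff_shape :: "('a::euclidean_space \<Rightarrow> real) \<Rightarrow> 'a set" where
  "wulff_shape \<gamma> = (\<Inter>\<theta>\<in>sphere 0 1. {x. x \<bullet> \<theta> \<le> \<gamma> \<theta>})"

definition wulff_radial :: "('a::euclidean_space \<Rightarrow> real) \<Rightarrow> 'a \<Rightarrow> real" where
  "wulff_radial \<gamma> \<theta> = (THE r. r > 0 \<and> r *\<^sub>R \<theta> \<in> frontier (wulff_shape \<gamma>))"

definition dual_gamma :: "('a::euclidean_space \<Rightarrow> real) \<Rightarrow> 'a \<Rightarrow> real" where
  "dual_gamma \<gamma> \<theta> = 1 / wulff_radial \<gamma> (- \<theta>)"

definition dual_wulff_shape :: "('a::euclidean_space \<Rightarrow> real) \<Rightarrow> 'a set" where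
  "dual_wulff_shape \<gamma> = wulff_shape (dual_gamma \<gamma>)"

definition self_dual :: "('a::euclidean_space \<Rightarrow> real) \<Rightarrow> bool" where
  "self_dual \<gamma> \<longleftrightarrow> wulff_shape \<gamma> = dual_wulff_shape \<gamma>"

end

theory Submission
  imports Defs
begin

lemma shrink_ray:
  fixes S :: "'a::euclidean_space set"
  assumes "convex S" "0 \<in> interior S" "s *\<^sub>R p \<in> S" "0 < d" "d < s"
  shows "d *\<^sub>R p \<in> interior S"
proof -
  have "s *\<^sub>R p - (1 - d/s) *\<^sub>R (s *\<^sub>R p - 0) \<in> interior S"
    using assms by (intro mem_interior_convex_shrink) (auto simp: field_simps)
  moreover have "s *\<^sub>R p - (1 - d/s) *\<^sub>R (s *\<^sub>R p - 0) = d *\<^sub>R p"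
    using assms by (simp add: algebra_simps)
  ultimately show ?thesis by simp
qed

lemma ray_unique:
  fixes S :: "'a::euclidean_space set"
  assumes "convex S" "closed S" "bounded S" "0 \<in> interior S" "p \<noteq> 0"
  shows "(THE r. r > 0 \<and> r *\<^sub>R p \<in> frontier S) > 0"
    and "(THE r. r > 0 \<and> r *\<^sub>R p \<in> frontier S) *\<^sub>R p \<in> S"
    and "\<And>s. s > 0 \<Longrightarrow> s *\<^sub>R p \<in> S \<Longrightarrow> s \<le> (THE r. r > 0 \<and> r *\<^sub>R p \<in> frontier S)"
proof -
  obtain d where d: "0 < d" "(0 + d *\<^sub>R p) \<in> frontier S"
    "\<And>e. \<lbrakk>0 \<le> e; e < d\<rbrakk> \<Longrightarrow> (0 + e *\<^sub>R p) \<in> interior S"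
    using ray_to_frontier[OF assms(3,4,5)] by blast
  have dS: "d *\<^sub>R p \<in> S" using d(2) assms(2) frontier_subset_closed by auto
  have le: "s \<le> d" if "s > 0" "s *\<^sub>R p \<in> S" for s
  proof (rule ccontr)
    assume "\<not> s \<le> d"
    then have "d *\<^sub>R p \<in> interior S" using shrink_ray[OF assms(1,4) that(2) d(1)] by simp
    then show False using d(2) by (simp add: frontier_def)
  qed
  have "(THE r. r > 0 \<and> r *\<^sub>R p \<in> frontier S) = d"
  proof (rule the_equality)
    show "0 < d \<and> d *\<^sub>R p \<in> frontier S" using d by simp
  next
    fix r assume r: "0 < r \<and> r *\<^sub>R p \<in> frontier S"
    have "r \<le> d" using le r assms(2) frontier_subset_closed by blast
    moreover have "\<not> r < d" using d(3)[of r] r by (auto simp: frontier_def)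
    ultimately show "r = d" by simp
  qed
  then show "(THE r. r > 0 \<and> r *\<^sub>R p \<in> frontier S) > 0"
    and "(THE r. r > 0 \<and> r *\<^sub>R p \<in> frontier S) *\<^sub>R p \<in> S"
    and "\<And>s. s > 0 \<Longrightarrow> s *\<^sub>R p \<in> S \<Longrightarrow> s \<le> (THE r. r > 0 \<and> r *\<^sub>R p \<in> frontier S)"
    using d dS le by auto
qed

theorem proposition4p1:
  fixes \<gamma> :: "'a::euclidean_space \<Rightarrow> real"
  assumes "continuous_on (sphere 0 1) \<gamma>"
    and "\<forall>\<theta>\<in>sphere 0 1. \<gamma> \<theta> > 0"
    and "self_dual \<gamma>"
  shows "(\<forall>x\<in>wulff_shape \<gamma>. - x \<in> wulff_shape \<gamma>) \<longleftrightarrow> wulff_shape \<gamma> = cball 0 1"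
proof
  assume eq: "wulff_shape \<gamma> = cball 0 1"
  show "\<forall>x\<in>wulff_shape \<gamma>. - x \<in> wulff_shape \<gamma>" unfolding eq by simp
next
  assume sym: "\<forall>x\<in>wulff_shape \<gamma>. - x \<in> wulff_shape \<gamma>"
  define W where "W = wulff_shape \<gamma>"
  have Wdef: "W = (\<Inter>\<theta>\<in>sphere 0 1. {x. x \<bullet> \<theta> \<le> \<gamma> \<theta>})"
    unfolding W_def wulff_shape_def ..
  have ne: "sphere (0::'a) 1 \<noteq> {}" by simp
  have cpt: "compact (\<gamma> ` sphere 0 1)"
    using assms(1) by (intro compact_continuous_image) auto
  obtain m where m: "m \<in> sphere 0 1" "\<And>y. y \<in> sphere 0 1 \<Longrightarrow> \<gamma> m \<le> \<gamma> y"
    using continuous_attains_inf[OF compact_sphere ne assms(1)] by blast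
  obtain M where M: "\<And>y. y \<in> sphere 0 1 \<Longrightarrow> \<gamma> y \<le> M"
    using continuous_attains_sup[OF compact_sphere ne assms(1)] by blast
  have mpos: "\<gamma> m > 0" using assms(2) m(1) by blast
  have convW: "convex W" unfolding Wdef
    by (intro convex_INT) (auto simp: inner_commute convex_halfspace_le)
  have closedW: "closed W" unfolding Wdef
    by (intro closed_INT) (auto simp: inner_commute closed_halfspace_le)
  have "ball 0 (\<gamma> m) \<subseteq> W"
  proof
    fix x :: 'a assume "x \<in> ball 0 (\<gamma> m)"
    then have nx: "norm x < \<gamma> m" by simp
    show "x \<in> W" unfolding Wdef
    proof (intro InterI, clarsimp)
      fix \<theta> :: 'a assume "norm \<theta> = 1"
      then have "x \<bullet> \<theta> \<le> norm x" using norm_cauchy_schwarz[of x \<theta>] by simp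
      also have "\<dots> \<le> \<gamma> \<theta>" using nx m(2)[of \<theta>] \<open>norm \<theta> = 1\<close> by simp
      finally show "x \<bullet> \<theta> \<le> \<gamma> \<theta>" .
    qed
  qed
  then have int0: "0 \<in> interior W"
    using mpos interior_maximal[of "ball 0 (\<gamma> m)" W] by auto
  have bnd: "W \<subseteq> cball 0 M"
  proof
    fix x :: 'a assume xW: "x \<in> W"
    show "x \<in> cball 0 M"
    proof (cases "x = 0")
      case True then show ?thesis using M[OF m(1)] mpos by simp
    next
      case False
      define t where "t = x /\<^sub>R norm x"
      have t: "t \<in> sphere 0 1" using False by (simp add: t_def)
      have "x \<bullet> t \<le> \<gamma> t" using xW t unfolding Wdef by blast
      moreover have "x \<bullet> t = norm x" using False
        by (simp add: t_def power2_norm_eq_inner[symmetric] power2_eq_square)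
      ultimately show ?thesis using M[OF t] by simp
    qed
  qed
  then have bddW: "bounded W" using bounded_cball bounded_subset by blast
  note R = ray_unique[OF convW closedW bddW int0]
  have rad: "wulff_radial \<gamma> p = (THE r. r > 0 \<and> r *\<^sub>R p \<in> frontier W)" for p
    unfolding wulff_radial_def W_def ..
  have sd: "W = (\<Inter>\<theta>\<in>sphere 0 1. {x. x \<bullet> \<theta> \<le> 1 / wulff_radial \<gamma> (- \<theta>)})"
    using assms(3) unfolding self_dual_def dual_wulff_shape_def wulff_shape_def dual_gamma_def W_def
    by simp
  have sub: "W \<subseteq> cball 0 1"
  proof
    fix x :: 'a assume xW: "x \<in> W"
    show "x \<in> cball 0 1"
    proof (cases "x = 0")
      case True then show ?thesis by simp
    next
      case False
      define t where "t = x /\<^sub>R norm x"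
      have t: "t \<in> sphere 0 1" using False by (simp add: t_def)
      have tn0: "- t \<noteq> 0" using t by auto
      have "- x \<in> W" using sym xW W_def by blast
      moreover have "- x = norm x *\<^sub>R (- t)" using False by (simp add: t_def)
      ultimately have le: "norm x \<le> wulff_radial \<gamma> (- t)"
        unfolding rad using R(3)[OF tn0, of "norm x"] False by simp
      have pos: "wulff_radial \<gamma> (- t) > 0" unfolding rad using R(1)[OF tn0] .
      have "x \<bullet> t \<le> 1 / wulff_radial \<gamma> (- t)" using xW t sd by blast
      moreover have "x \<bullet> t = norm x" using False
        by (simp add: t_def power2_norm_eq_inner[symmetric] power2_eq_square)
      ultimately have a: "norm x \<le> 1 / wulff_radial \<gamma> (- t)" by simp
      then have b: "norm x * wulff_radial \<gamma> (- t) \<le> 1" using pos by (simp add: le_divide_eq)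
      have "norm x * norm x \<le> norm x * wulff_radial \<gamma> (- t)"
        using le by (simp add: mult_left_mono)
      then have c: "norm x * norm x \<le> 1" using b by linarith
      have "norm x \<le> 1"
      proof (rule ccontr)
        assume "\<not> norm x \<le> 1"
        then have "1 < norm x" by simp
        then have "1 * 1 < norm x * norm x" by (intro mult_strict_mono) auto
        then show False using c by simp
      qed
      then show ?thesis by simp
    qed
  qed
  have "cball 0 1 \<subseteq> W"
  proof
    fix x :: 'a assume "x \<in> cball 0 1"
    then have nx: "norm x \<le> 1" by simp
    show "x \<in> W" unfolding sd
    proof (intro InterI, clarsimp)
      fix \<theta> :: 'a assume n1: "norm \<theta> = 1"
      then have tn0: "- \<theta> \<noteq> 0" by auto
      have pos: "wulff_radial \<gamma> (- \<theta>) > 0" unfolding rad using R(1)[OF tn0] .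
      have "wulff_radial \<gamma> (- \<theta>) *\<^sub>R (- \<theta>) \<in> W" unfolding rad using R(2)[OF tn0] .
      then have "norm (wulff_radial \<gamma> (- \<theta>) *\<^sub>R (- \<theta>)) \<le> 1" using sub by auto
      then have r1: "wulff_radial \<gamma> (- \<theta>) \<le> 1" using pos n1 by simp
      have "x \<bullet> \<theta> \<le> norm x" using norm_cauchy_schwarz[of x \<theta>] n1 by simp
      also have "\<dots> \<le> 1" by (rule nx)
      also have "\<dots> \<le> 1 / wulff_radial \<gamma> (- \<theta>)" using pos r1 by (simp add: le_divide_eq)
      finally show "x \<bullet> \<theta> \<le> 1 / wulff_radial \<gamma> (- \<theta>)" .
    qed
  qed
  with sub show "wulff_shape \<gamma> = cball 0 1" unfolding W_def by blast
qed

end
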